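(* For integers $\lambda,k,\ell\ge0$ set \[ a_{\lambda,k,\ell} = 4^\lambda \sum_{2^\lambda\leq t<2^{\lambda+1}} \delta(\lambda+1-k,t)\,\delta(\lambda+1-\ell,t). \] Then the generating function $A(x,y,z) = \sum_{\lambda,k,\ell\ge 0} a_{\lambda,k,\ell} x^\lambda y^k z^\ell$ is given by \[ A(x,y,z) = \frac 1{(2-y)(2-z)} \cdot \frac{1+\frac {xz^2}{1-2xz(1+yz)}+\frac{xy^2}{1-2xy(1+yz)}} {1-x(1+yz)^2-\frac{xyz}{1-2xz(1+yz)}-\frac {xyz}{1-2xy(1+yz)}}. \] Furthermore, for every $\lambda\ge0$, \[ \sum_{2^\lambda\leq t<2^{\lambda+1}}c_t^2 = \frac 1{4^\lambda}\sum_{0\le k,\ell\leq \lambda+1}a_{\lambda,k,\ell} \quad\text{and}\quad \sum_{2^\lambda\leq t<2^{\lambda+1}}\tilde c_t^2 = \frac 1{4^\lambda}\sum_{0\le k,\ell\leq \lambda}a_{\lambda,k,\ell}, \] so that \[ \frac 1{2^\lambda} \sum_{2^\lambda\leq t<2^{\lambda+1}}c_t^2 = \frac 1{8^\lambda} \left[x^{\lambda} y^{\lambda+1} z^{\lambda+1}\right] \frac{A(x,y,z)}{(1-y)(1-z)} \] and \[ \frac 1{2^\lambda} \sum_{2^\lambda\leq t<2^{\lambda+1}}\tilde c_t^2 = \frac 1{8^\lambda} \left[x^{\lambda} y^{\lambda} z^{\lambda}\right] \frac{A(x,y,z)}{(1-y)(1-z)}. \]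
   Context: $s(n)$ denotes the binary sum of digits of $n\ge0$. For $k\in\mathbb{Z}$ and $t\ge0$, $\delta(k,t)$ is the asymptotic density of $\{n\ge0: s(n+t)-s(n)=k\}$ (it exists). For $t\ge0$, $c_t$ (resp. $\tilde c_t$) is the asymptotic density of $\{n\ge0: s(n+t)\ge s(n)\}$ (resp. $\{n\ge 0: s(n+t)>s(n)\}$). $[x^ay^bz^c]$ denotes extraction of the coefficient of $x^ay^bz^c$ in a formal power series. *)

theory Defs
  imports Complex_Main "HOL-Computational_Algebra.Formal_Power_Series"
begin

fun bsum :: "nat \<Rightarrow> nat" where
  "bsum n = (if n = 0 then 0 else n mod 2 + bsum (n div 2))"
declare bsum.simps[simp del]

definition adensity :: "nat set \<Rightarrow> real" where
  "adensity S = lim (\<lambda>N. real (card {n\<in>S. n < N}) / real N)"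

definition delta :: "int \<Rightarrow> nat \<Rightarrow> real" where
  "delta k t = adensity {n. int (bsum (n + t)) - int (bsum n) = k}"

definition cdens :: "nat \<Rightarrow> real" where
  "cdens t = adensity {n. bsum (n + t) \<ge> bsum n}"

definition ctdens :: "nat \<Rightarrow> real" where
  "ctdens t = adensity {n. bsum (n + t) > bsum n}"

definition acoef :: "nat \<Rightarrow> nat \<Rightarrow> nat \<Rightarrow> real" where
  "acoef lam k l = 4 ^ lam * (\<Sum>t\<in>{2^lam..<2^(lam+1)}.
      delta (int lam + 1 - int k) t * delta (int lam + 1 - int l) t)"

text \<open>Trivariate power series in x,y,z as nested series R[[z]][[y]][[x]]:
  coefficient of x^a y^b z^c of F is the c-th coefficient of the b-th coefficient of the a-th coefficient of F.\<close>
type_synonym fps3 = "real fps fps fps"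

definition gfA :: fps3 where
  "gfA = Abs_fps (\<lambda>lam. Abs_fps (\<lambda>k. Abs_fps (\<lambda>l. acoef lam k l)))"

definition Xv :: fps3 where "Xv = fps_X"
definition Yv :: fps3 where "Yv = fps_const fps_X"
definition Zv :: fps3 where "Zv = fps_const (fps_const fps_X)"

definition coeff3 :: "fps3 \<Rightarrow> nat \<Rightarrow> nat \<Rightarrow> nat \<Rightarrow> real" where
  "coeff3 F a b c = fps_nth (fps_nth (fps_nth F a) b) c"

end

theory Submission
  imports Defs
begin

unbundle fps_syntax


definition mk :: "(nat \<Rightarrow> nat \<Rightarrow> nat \<Rightarrow> real) \<Rightarrow> fps3" where
  "mk f = Abs_fps (\<lambda>a. Abs_fps (\<lambda>b. Abs_fps (\<lambda>c. f a b c)))"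

lemma mk_coeff3: "mk (coeff3 F) = F"
  unfolding mk_def coeff3_def by (intro fps_ext) (simp add: fps_ext)

lemma coeff3_mk[simp]: "coeff3 (mk f) a b c = f a b c"
  unfolding mk_def coeff3_def by simp

lemma mk_eq_iff: "mk f = mk g \<longleftrightarrow> f = g"
  by (metis coeff3_mk ext)

lemma mk_add: "mk f + mk g = mk (\<lambda>a b c. f a b c + g a b c)"
  unfolding mk_def by (intro fps_ext) (simp add: fps_ext)

lemma mk_diff: "mk f - mk g = mk (\<lambda>a b c. f a b c - g a b c)"
  unfolding mk_def by (intro fps_ext) (simp add: fps_ext)

lemma mk_X: "Xv * mk f = mk (\<lambda>a b c. if a = 0 then 0 else f (a - 1) b c)"
  unfolding mk_def Xv_def by (intro fps_ext) (simp add: fps_ext)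

lemma mk_Y: "Yv * mk f = mk (\<lambda>a b c. if b = 0 then 0 else f a (b - 1) c)"
  unfolding mk_def Yv_def by (intro fps_ext) (simp add: fps_ext)

lemma mk_Z: "Zv * mk f = mk (\<lambda>a b c. if c = 0 then 0 else f a b (c - 1))"
  unfolding mk_def Zv_def by (intro fps_ext) (simp add: fps_ext)

lemma mk_num: "numeral w * mk f = mk (\<lambda>a b c. numeral w * f a b c)"
  unfolding mk_def by (intro fps_ext) (simp add: fps_ext numeral_fps_const)

lemma mk_one: "(1::fps3) = mk (\<lambda>a b c. if a = 0 \<and> b = 0 \<and> c = 0 then 1 else 0)"
  unfolding mk_def by (intro fps_ext) (simp add: fps_ext)

lemma gfA_mk: "gfA = mk acoef"
  unfolding mk_def gfA_def ..

lemma fps_inv_right: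
  fixes f :: "'a::{comm_ring_1,inverse} fps"
  assumes "f $ 0 * inverse (f $ 0) = 1"
  shows "f * inverse f = 1"
  unfolding fps_inverse_def using fps_right_inverse[OF assms] .

lemma inv1: "(f::real fps) $ 0 \<noteq> 0 \<Longrightarrow> f * inverse f = 1"
  by (rule fps_inv_right) simp

lemma inv2: "((f::real fps fps) $ 0) $ 0 \<noteq> 0 \<Longrightarrow> f * inverse f = 1"
  by (rule fps_inv_right) (simp add: inv1)

lemma inv3: "coeff3 (f::fps3) 0 0 0 \<noteq> 0 \<Longrightarrow> f * inverse f = 1"
  unfolding coeff3_def by (rule fps_inv_right) (simp add: inv2)

lemma inv_unique: assumes "(f::fps3) * g = 1" "coeff3 f 0 0 0 \<noteq> 0" shows "inverse f = g"
proof -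
  have "inverse f = inverse f * (f * g)" using assms(1) by simp
  also have "\<dots> = (f * inverse f) * g" by (simp add: algebra_simps)
  also have "\<dots> = g" using inv3[OF assms(2)] by simp
  finally show ?thesis .
qed


definition cnt :: "nat set \<Rightarrow> nat \<Rightarrow> nat" where
  "cnt S N = card {n\<in>S. n < N}"

definition has_dens :: "nat set \<Rightarrow> real \<Rightarrow> bool" where
  "has_dens S d \<longleftrightarrow> (\<lambda>N. real (cnt S N) / real N) \<longlonglongrightarrow> d"

lemma adensity_eq: "has_dens S d \<Longrightarrow> adensity S = d"
  unfolding has_dens_def adensity_def cnt_def by (rule limI)

lemma has_dens_unique: "has_dens S d \<Longrightarrow> has_dens S e \<Longrightarrow> d = e"
  unfolding has_dens_def using LIMSEQ_unique by blast

lemma has_dens_empty: "has_dens {} 0"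
  unfolding has_dens_def cnt_def by simp

lemma has_dens_UNIV: "has_dens UNIV 1"
  unfolding has_dens_def cnt_def
proof -
  have "\<forall>\<^sub>F N in sequentially. 1 = real (card {n \<in> UNIV. n < N}) / real N"
    using eventually_gt_at_top[of "0::nat"] by eventually_elim simp
  then show "(\<lambda>N. real (card {n \<in> UNIV. n < N}) / real N) \<longlonglongrightarrow> 1"
    by (rule Lim_transform_eventually[OF tendsto_const])
qed

lemma cnt_union: "S \<inter> T = {} \<Longrightarrow> cnt (S \<union> T) N = cnt S N + cnt T N"
proof -
  assume "S \<inter> T = {}"
  then have "{n\<in>S \<union> T. n < N} = {n\<in>S. n < N} \<union> {n\<in>T. n < N}"
    "{n\<in>S. n < N} \<inter> {n\<in>T. n < N} = {}" by auto
  then show ?thesis unfolding cnt_def by (simp add: card_Un_disjoint)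
qed

lemma has_dens_union: "has_dens S d \<Longrightarrow> has_dens T e \<Longrightarrow> S \<inter> T = {} \<Longrightarrow> has_dens (S \<union> T) (d + e)"
  unfolding has_dens_def by (simp add: cnt_union add_divide_distrib tendsto_add)

lemma has_dens_UN:
  assumes "finite I" "\<And>i. i \<in> I \<Longrightarrow> has_dens (F i) (d i)"
    "\<And>i j. i \<in> I \<Longrightarrow> j \<in> I \<Longrightarrow> i \<noteq> j \<Longrightarrow> F i \<inter> F j = {}"
  shows "has_dens (\<Union>i\<in>I. F i) (\<Sum>i\<in>I. d i)"
  using assms
proof (induction I rule: finite_induct)
  case empty
  then show ?case using has_dens_empty by simp
next
  case (insert x I)
  have "has_dens (F x \<union> (\<Union>i\<in>I. F i)) (d x + (\<Sum>i\<in>I. d i))"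
    by (rule has_dens_union) (use insert in auto)
  then show ?case using insert by simp
qed

lemma cnt_split_even: "cnt S (2*M) = cnt {m. 2*m \<in> S} M + cnt {m. 2*m+1 \<in> S} M"
proof (induction M)
  case 0
  then show ?case by (simp add: cnt_def)
next
  case (Suc M)
  have a: "{n\<in>S. n < Suc k} = {n\<in>S. n < k} \<union> (if k \<in> S then {k} else {})" for S k
    by (auto simp: less_Suc_eq)
  have b: "cnt S (Suc k) = cnt S k + (if k \<in> S then 1 else 0)" for S k
    unfolding cnt_def a by (auto simp: card_insert_if)
  have "cnt S (2 * Suc M) = cnt S (Suc (Suc (2*M)))" by simp
  then show ?case using Suc by (simp add: b)
qed

lemma cnt_le_Suc: "cnt S (Suc k) \<le> cnt S k + 1" "cnt S k \<le> cnt S (Suc k)"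
proof -
  have a: "{n\<in>S. n < Suc k} = {n\<in>S. n < k} \<union> (if k \<in> S then {k} else {})"
    by (auto simp: less_Suc_eq)
  show "cnt S (Suc k) \<le> cnt S k + 1" "cnt S k \<le> cnt S (Suc k)"
    unfolding cnt_def a by (auto simp: card_insert_if)
qed

lemma div2_tendsto: "(\<lambda>N. real (N div 2) / real N) \<longlonglongrightarrow> 1/2"
proof (rule tendsto_sandwich)
  show "\<forall>\<^sub>F N in sequentially. 1/2 - (1/2) / real N \<le> real (N div 2) / real N"
    using eventually_gt_at_top[of "0::nat"]
  proof eventually_elim
    case (elim N)
    have "N \<le> 2 * (N div 2) + 1" by linarith
    then have "real N \<le> 2 * real (N div 2) + 1" by linarith
    then have "(real N - 1) / 2 \<le> real (N div 2)" by (simp add: field_simps)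
    then have "((real N - 1) / 2) / real N \<le> real (N div 2) / real N"
      by (rule divide_right_mono) simp_all
    moreover have "1/2 - (1/2) / real N = ((real N - 1) / 2) / real N" using elim by (simp add: field_simps)
    ultimately show ?case by simp
  qed
  show "\<forall>\<^sub>F N in sequentially. real (N div 2) / real N \<le> 1/2"
    using eventually_gt_at_top[of "0::nat"]
  proof eventually_elim
    case (elim N)
    have "2 * real (N div 2) \<le> real N" by linarith
    then show ?case using elim by (simp add: field_simps)
  qed
  show "(\<lambda>N. 1/2 - (1/2) / real N) \<longlonglongrightarrow> 1/2"
    using tendsto_diff[OF tendsto_const lim_const_over_n[of "1/2"]] by simp
  show "(\<lambda>N. 1/2::real) \<longlonglongrightarrow> 1/2" by simp
qed

lemma div2_filterlim: "filterlim (\<lambda>N::nat. N div 2) sequentially sequentially"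
  unfolding filterlim_at_top
proof
  fix Z :: nat
  show "\<forall>\<^sub>F N in sequentially. Z \<le> N div 2"
    using eventually_ge_at_top[of "2*Z"] by eventually_elim linarith
qed

lemma has_dens_split:
  assumes E: "has_dens {m. 2*m \<in> S} d0" and O: "has_dens {m. 2*m+1 \<in> S} d1"
  shows "has_dens S ((d0 + d1) / 2)"
proof -
  define E' where "E' = {m. 2*m \<in> S}"
  define O' where "O' = {m. 2*m+1 \<in> S}"
  define g where "g N = (real (cnt E' (N div 2)) / real (N div 2) + real (cnt O' (N div 2)) / real (N div 2))
      * (real (N div 2) / real N)" for N
  have g1: "(\<lambda>N. real (cnt E' (N div 2)) / real (N div 2)) \<longlonglongrightarrow> d0"
    using filterlim_compose[OF E[unfolded has_dens_def, folded E'_def] div2_filterlim] by (simp add: o_def)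
  have g2: "(\<lambda>N. real (cnt O' (N div 2)) / real (N div 2)) \<longlonglongrightarrow> d1"
    using filterlim_compose[OF O[unfolded has_dens_def, folded O'_def] div2_filterlim] by (simp add: o_def)
  have glim: "g \<longlonglongrightarrow> (d0 + d1) * (1/2)"
    unfolding g_def by (intro tendsto_mult tendsto_add g1 g2 div2_tendsto)
  have geq: "\<forall>\<^sub>F N in sequentially. g N = real (cnt E' (N div 2) + cnt O' (N div 2)) / real N"
    using eventually_ge_at_top[of "2::nat"]
  proof eventually_elim
    case (elim N)
    then have "N div 2 > 0" by simp
    then show ?case unfolding g_def by (simp add: field_simps)
  qed
  have key: "\<bar>real (cnt S N) - real (cnt E' (N div 2) + cnt O' (N div 2))\<bar> \<le> 1" for N
  proof -
    have c: "cnt S (2 * (N div 2)) = cnt E' (N div 2) + cnt O' (N div 2)"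
      unfolding E'_def O'_def by (rule cnt_split_even)
    show ?thesis
    proof (cases "even N")
      case True
      then have "N = 2 * (N div 2)" by simp
      then show ?thesis using c by (metis abs_zero diff_self of_nat_0_le_iff order_trans zero_le_one abs_eq_0_iff)
    next
      case False
      then have "N = Suc (2 * (N div 2))" by presburger
      then have "cnt S N \<le> cnt S (2 * (N div 2)) + 1" "cnt S (2 * (N div 2)) \<le> cnt S N"
        using cnt_le_Suc[of S "2 * (N div 2)"] by (metis)+
      then show ?thesis using c by linarith
    qed
  qed
  have diff0: "(\<lambda>N. real (cnt S N) / real N - real (cnt E' (N div 2) + cnt O' (N div 2)) / real N) \<longlonglongrightarrow> 0"
  proof (rule tendsto_0_le[where K=1])
    show "\<forall>\<^sub>F N in sequentially. norm (real (cnt S N) / real N - real (cnt E' (N div 2) + cnt O' (N div 2)) / real N) \<le> norm (1 / real N) * 1"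
      using eventually_gt_at_top[of "0::nat"]
    proof eventually_elim
      case (elim N)
      have "norm (real (cnt S N) / real N - real (cnt E' (N div 2) + cnt O' (N div 2)) / real N)
          = \<bar>real (cnt S N) - real (cnt E' (N div 2) + cnt O' (N div 2))\<bar> / real N"
        using elim by (simp add: diff_divide_distrib[symmetric])
      also have "\<dots> \<le> norm (1 / real N) * 1" using key[of N] elim by (simp add: divide_right_mono)
      finally show ?case .
    qed
    show "(\<lambda>N. 1 / real N) \<longlonglongrightarrow> 0" by (rule lim_const_over_n)
  qed
  have "(\<lambda>N. real (cnt E' (N div 2) + cnt O' (N div 2)) / real N) \<longlonglongrightarrow> (d0 + d1) * (1/2)"
    using Lim_transform_eventually[OF glim geq] .
  from tendsto_add[OF diff0 this]
  show ?thesis unfolding has_dens_def by simp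
qed


lemma bsum_0[simp]: "bsum 0 = 0" by (simp add: bsum.simps)
lemma bsum_even: "bsum (2*m) = bsum m"
  by (cases "m = 0") (subst bsum.simps, simp)+
lemma bsum_odd: "bsum (Suc (2*m)) = Suc (bsum m)"
  by (subst bsum.simps) simp

lemma bsum_add_le: "bsum (a + b) \<le> bsum a + bsum b"
proof (induction "a + b" arbitrary: a b rule: less_induct)
  case less
  show ?case
  proof (cases "a = 0 \<or> b = 0")
    case True then show ?thesis by auto
  next
    case False
    obtain a' x where a: "a = 2*a' + x" "x < 2" by (metis div_mult_mod_eq mod_less_divisor pos2 mult.commute)
    obtain b' y where b: "b = 2*b' + y" "y < 2" by (metis div_mult_mod_eq mod_less_divisor pos2 mult.commute)
    have lt: "a' + b' < a + b" using False a b by auto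
    have IH: "bsum (a' + b') \<le> bsum a' + bsum b'" using less(1)[OF lt] .
    have ba: "bsum a = bsum a' + x" using a
      by (cases "x = 0") (auto simp: bsum_even bsum_odd less_2_cases_iff)
    have bb: "bsum b = bsum b' + y" using b
      by (cases "y = 0") (auto simp: bsum_even bsum_odd less_2_cases_iff)
    show ?thesis
    proof (cases "x + y < 2")
      case True
      have e1: "bsum (2*a'+2*b') = bsum (a'+b')" using bsum_even[of "a'+b'"] by (simp add: algebra_simps)
      have e2: "bsum (Suc (2*a'+2*b')) = Suc (bsum (a'+b'))" using bsum_odd[of "a'+b'"] by (simp add: algebra_simps)
      have "a + b = 2*a'+2*b' + (x+y)" "x + y = 0 \<or> x + y = 1" using a b True by auto
      then have "bsum (a+b) = bsum (a'+b') + (x+y)"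
        using e1 e2 by auto
      then show ?thesis using IH ba bb by simp
    next
      case False
      then have xy: "x = 1" "y = 1" using a b by auto
      then have ab: "a + b = 2*(a'+b'+1)" using a b by simp
      have lt2: "(a'+b') + 1 < a + b" using a b xy by simp
      have "bsum (a'+b'+1) \<le> bsum (a'+b') + bsum 1" using less(1)[OF lt2] .
      moreover have "bsum 1 = 1" using bsum_odd[of 0] by simp
      moreover have "bsum (Suc (Suc (2*a'+2*b'))) = bsum (Suc (a'+b'))"
        using bsum_even[of "Suc (a'+b')"] by (simp add: algebra_simps)
      ultimately show ?thesis using ab IH ba bb xy by simp
    qed
  qed
qed

lemma bsum_lt_pow: "t < 2^k \<Longrightarrow> bsum t \<le> k"
proof (induction k arbitrary: t)
  case 0 then show ?case by simp
next
  case (Suc k)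
  obtain t' x where t: "t = 2*t' + x" "x < 2" by (metis div_mult_mod_eq mod_less_divisor pos2 mult.commute)
  then have "t' < 2^k" using Suc by simp
  then have "bsum t' \<le> k" using Suc by simp
  moreover have "bsum t = bsum t' + x" using t
      by (cases "x = 0") (auto simp: bsum_even bsum_odd less_2_cases_iff)
  ultimately show ?case using t by simp
qed

lemma bsum_pow: "bsum (2^k) = 1"
  by (induction k) (simp_all add: bsum_even bsum_odd[of 0, simplified])

definition Sset :: "int \<Rightarrow> nat \<Rightarrow> nat set" where
  "Sset j t = {n. int (bsum (n + t)) - int (bsum n) = j}"

lemma delta_Sset: "delta j t = adensity (Sset j t)"
  unfolding delta_def Sset_def ..

lemma Sset_0: "Sset j 0 = (if j = 0 then UNIV else {})"
  unfolding Sset_def by auto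

lemma Sset_big: "j > int (bsum t) \<Longrightarrow> Sset j t = {}"
proof -
  assume j: "j > int (bsum t)"
  { fix n have "int (bsum (n + t)) - int (bsum n) \<noteq> j" using bsum_add_le[of n t] j by linarith }
  then show ?thesis unfolding Sset_def by auto
qed

lemma E_even: "{m. 2*m \<in> Sset j (2*t)} = Sset j t"
proof -
  have h: "bsum (2*m + 2*t) = bsum (m+t)" for m using bsum_even[of "m+t"] by (simp add: algebra_simps)
  show ?thesis unfolding Sset_def by (simp add: h bsum_even)
qed

lemma O_even: "{m. 2*m+1 \<in> Sset j (2*t)} = Sset j t"
proof -
  have h: "bsum (Suc (2*m + 2*t)) = Suc (bsum (m+t))" for m using bsum_odd[of "m+t"] by (simp add: algebra_simps)
  show ?thesis unfolding Sset_def by (simp add: h bsum_odd)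
qed

lemma E_odd: "{m. 2*m \<in> Sset j (2*t+1)} = Sset (j-1) t"
proof -
  have h: "bsum (Suc (2*m + 2*t)) = Suc (bsum (m+t))" for m using bsum_odd[of "m+t"] by (simp add: algebra_simps)
  show ?thesis unfolding Sset_def by (auto simp: h bsum_even)
qed

lemma O_odd: "{m. 2*m+1 \<in> Sset j (2*t+1)} = Sset (j+1) (t+1)"
proof -
  have h: "bsum (Suc (Suc (2*m + 2*t))) = bsum (Suc (m+t))" for m using bsum_even[of "Suc (m+t)"] by (simp add: algebra_simps)
  show ?thesis unfolding Sset_def by (auto simp: h bsum_odd)
qed

definition d1 :: "int \<Rightarrow> real" where
  "d1 j = (if j \<le> 1 then 1 / 2 ^ nat (2 - j) else 0)"

lemma bsum_1: "bsum 1 = 1" using bsum_odd[of 0] by simp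

lemma dens1: "has_dens (Sset j 1) (d1 j)"
proof (cases "j \<le> 1")
  case False
  then have "Sset j 1 = {}" using Sset_big[of 1 j] bsum_1 by simp
  then show ?thesis using False has_dens_empty by (simp add: d1_def)
next
  case True
  define m where "m = nat (1 - j)"
  have "j = 1 - int m" using True m_def by simp
  then show ?thesis
  proof (induction m arbitrary: j)
    case 0
    have "has_dens (Sset j 1) ((1 + 0) / 2)"
    proof (rule has_dens_split)
      show "has_dens {m. 2 * m \<in> Sset j 1} 1"
        using E_odd[of j 0] Sset_0 has_dens_UNIV 0 by simp
      show "has_dens {m. 2 * m + 1 \<in> Sset j 1} 0"
        using O_odd[of j 0] Sset_big[of 1 "j+1"] bsum_1 has_dens_empty 0 by simp
    qed
    then show ?case using 0 by (simp add: d1_def)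
  next
    case (Suc m)
    have "has_dens (Sset j 1) ((0 + d1 (j+1)) / 2)"
    proof (rule has_dens_split)
      show "has_dens {m. 2 * m \<in> Sset j 1} 0"
        using E_odd[of j 0] Sset_0 has_dens_empty Suc.prems by simp
      show "has_dens {m. 2 * m + 1 \<in> Sset j 1} (d1 (j+1))"
        using O_odd[of j 0] Suc.IH[of "j+1"] Suc.prems by simp
    qed
    moreover have "(0 + d1 (j+1)) / 2 = d1 j"
    proof -
      have "nat (2 - j) = Suc (nat (1 - j))" using Suc.prems by simp
      moreover have "nat (2 - (j+1)) = nat (1 - j)" by simp
      ultimately show ?thesis using Suc.prems by (simp add: d1_def)
    qed
    ultimately show ?case by simp
  qed
qed

lemma ex_dens: "\<exists>d. has_dens (Sset j t) d"
proof (induction t arbitrary: j rule: less_induct)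
  case (less t)
  consider "t = 0" | "t = 1" | t' where "t = 2*t'" "t' \<ge> 1" | t' where "t = 2*t'+1" "t' \<ge> 1"
    by (metis One_nat_def add_0 add_cancel_right_left le_eq_less_or_eq less_one not_less_iff_gr_or_eq oddE evenE less_Suc_eq_0_disj mult_is_0)
  then show ?case
  proof cases
    case 1 then show ?thesis using Sset_0 has_dens_UNIV has_dens_empty by (cases "j = 0") auto
  next
    case 2 then show ?thesis using dens1 by blast
  next
    case 3
    then obtain d where d: "has_dens (Sset j t') d" using less by fastforce
    have "has_dens (Sset j t) ((d + d)/2)"
      by (rule has_dens_split) (use 3 E_even O_even d in auto)
    then show ?thesis by blast
  next
    case 4
    then obtain d where d: "has_dens (Sset (j-1) t') d" using less by fastforce
    obtain e where e: "has_dens (Sset (j+1) (t'+1)) e" using less 4 by fastforce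
    have "has_dens (Sset j t) ((d + e)/2)"
      by (rule has_dens_split) (use 4 E_odd O_odd d e in auto)
    then show ?thesis by blast
  qed
qed

lemma delta_dens: "has_dens (Sset j t) (delta j t)"
proof -
  obtain d where d: "has_dens (Sset j t) d" using ex_dens by blast
  then have "delta j t = d" unfolding delta_Sset by (rule adensity_eq)
  then show ?thesis using d by simp
qed

lemma delta_even: "delta j (2*t) = delta j t"
proof -
  have "has_dens (Sset j (2*t)) ((delta j t + delta j t)/2)"
    apply (rule has_dens_split)
     apply (subst E_even, rule delta_dens)
    apply (subst O_even, rule delta_dens)
    done
  from has_dens_unique[OF delta_dens this] show ?thesis by simp
qed

lemma delta_odd: "delta j (2*t+1) = (delta (j-1) t + delta (j+1) (t+1)) / 2"
proof -
  have "has_dens (Sset j (2*t+1)) ((delta (j-1) t + delta (j+1) (t+1))/2)"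
    apply (rule has_dens_split)
     apply (subst E_odd, rule delta_dens)
    apply (subst O_odd, rule delta_dens)
    done
  from has_dens_unique[OF delta_dens this] show ?thesis by simp
qed

lemma delta_1: "delta j 1 = d1 j"
  using has_dens_unique[OF delta_dens dens1] .

lemma delta_big: "j > int (bsum t) \<Longrightarrow> delta j t = 0"
proof -
  assume "j > int (bsum t)"
  then have "has_dens (Sset j t) 0" using has_dens_empty Sset_big by simp
  from has_dens_unique[OF delta_dens this] show ?thesis .
qed

lemma delta_pow: "delta j (2^k) = delta j 1"
  by (induction k) (simp_all add: delta_even)


definition DA :: "nat \<Rightarrow> int \<Rightarrow> int \<Rightarrow> real" where
  "DA lam p q = (\<Sum>t\<in>{2^lam..<2^(lam+1)}. delta p t * delta q t)"
definition DC :: "nat \<Rightarrow> int \<Rightarrow> int \<Rightarrow> real" where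
  "DC lam p q = (\<Sum>t\<in>{2^lam..<2^(lam+1)}. delta p t * delta q (t+1))"

lemma sum_split2: "(a::nat) \<le> b \<Longrightarrow> (\<Sum>t\<in>{2*a..<2*b}. (f t::real)) = (\<Sum>u\<in>{a..<b}. f (2*u) + f (2*u+1))"
proof (induction b)
  case 0 then show ?case by simp
next
  case (Suc b)
  show ?case
  proof (cases "a = Suc b")
    case True then show ?thesis by simp
  next
    case False
    then have ab: "a \<le> b" using Suc by simp
    have "{2*a..<2*Suc b} = insert (2*b+1) (insert (2*b) {2*a..<2*b})" using ab by auto
    then have "(\<Sum>t\<in>{2*a..<2*Suc b}. f t) = f (2*b+1) + (f (2*b) + (\<Sum>t\<in>{2*a..<2*b}. f t))"
      by simp
    also have "\<dots> = (\<Sum>u\<in>{a..<Suc b}. f (2*u) + f (2*u+1))"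
      using Suc.IH[OF ab] ab by (simp add: add_ac)
    finally show ?thesis .
  qed
qed

lemma sum_shift1: "(a::nat) \<le> b \<Longrightarrow> (\<Sum>u\<in>{a..<b}. f (u+1)) = (\<Sum>u\<in>{a..<b}. f u) - f a + (f b :: real)"
proof (induction b)
  case 0 then show ?case by simp
next
  case (Suc b)
  show ?case
  proof (cases "a = Suc b")
    case True then show ?thesis by simp
  next
    case False
    then have ab: "a \<le> b" using Suc by simp
    show ?thesis using Suc.IH[OF ab] ab by simp
  qed
qed

lemma shift_pow: "(\<Sum>u\<in>{2^lam..<2^(lam+1)}. delta p (u+1) * delta q (u+1))
   = (\<Sum>u\<in>{2^lam..<2^(lam+1)}. delta p u * delta q u)"
proof -
  have le: "(2::nat)^lam \<le> 2^(lam+1)" by simp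
  show ?thesis using sum_shift1[OF le, of "\<lambda>u. delta p u * delta q u"]
    by (simp add: delta_pow del: power_Suc)
qed

lemma pow_Suc2: "(2::nat)^(Suc lam) = 2 * 2^lam" "(2::nat)^(Suc lam + 1) = 2 * 2^(lam+1)"
  by simp_all

lemma delta_even2: "delta j (2*u+2) = delta j (u+1)"
  using delta_even[of j "u+1"] by (simp add: algebra_simps)

lemma DA_rec: "DA (Suc lam) p q = DA lam p q +
   (DA lam (p-1) (q-1) + DC lam (p-1) (q+1) + DC lam (q-1) (p+1) + DA lam (p+1) (q+1)) / 4"
proof -
  have le: "(2::nat)^lam \<le> 2^(lam+1)" by simp
  have "DA (Suc lam) p q = (\<Sum>u\<in>{2^lam..<2^(lam+1)}. delta p (2*u) * delta q (2*u) + delta p (2*u+1) * delta q (2*u+1))"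
    unfolding DA_def pow_Suc2 by (rule sum_split2[OF le])
  also have "\<dots> = (\<Sum>u\<in>{2^lam..<2^(lam+1)}. delta p u * delta q u +
      (delta (p-1) u * delta (q-1) u + delta (p-1) u * delta (q+1) (u+1) + delta (q-1) u * delta (p+1) (u+1)
       + delta (p+1) (u+1) * delta (q+1) (u+1)) / 4)"
  proof (rule sum.cong)
    fix u
    show "delta p (2*u) * delta q (2*u) + delta p (2*u+1) * delta q (2*u+1) =
      delta p u * delta q u +
      (delta (p-1) u * delta (q-1) u + delta (p-1) u * delta (q+1) (u+1) + delta (q-1) u * delta (p+1) (u+1)
       + delta (p+1) (u+1) * delta (q+1) (u+1)) / 4"
      unfolding delta_even delta_odd by (simp add: field_simps)
  qed simp
  also have "\<dots> = DA lam p q + (DA lam (p-1) (q-1) + DC lam (p-1) (q+1) + DC lam (q-1) (p+1)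
      + (\<Sum>u\<in>{2^lam..<2^(lam+1)}. delta (p+1) (u+1) * delta (q+1) (u+1))) / 4"
    unfolding DA_def DC_def by (simp only: sum.distrib sum_divide_distrib[symmetric])
  also have "\<dots> = DA lam p q +
   (DA lam (p-1) (q-1) + DC lam (p-1) (q+1) + DC lam (q-1) (p+1) + DA lam (p+1) (q+1)) / 4"
    unfolding shift_pow DA_def ..
  finally show ?thesis .
qed

lemma DC_rec: "DC (Suc lam) p q =
   (DA lam p (q-1) + DC lam p (q+1) + DC lam (p-1) q + DA lam (p+1) q) / 2"
proof -
  have le: "(2::nat)^lam \<le> 2^(lam+1)" by simp
  have "DC (Suc lam) p q = (\<Sum>u\<in>{2^lam..<2^(lam+1)}. delta p (2*u) * delta q (2*u+1) + delta p (2*u+1) * delta q (2*u+1+1))"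
    unfolding DC_def pow_Suc2 by (rule sum_split2[OF le])
  also have "\<dots> = (\<Sum>u\<in>{2^lam..<2^(lam+1)}.
      (delta p u * delta (q-1) u + delta p u * delta (q+1) (u+1) + delta (p-1) u * delta q (u+1)
       + delta (p+1) (u+1) * delta q (u+1)) / 2)"
  proof (rule sum.cong)
    fix u
    have "delta q (2*u+1+1) = delta q (u+1)" using delta_even2 by simp
    then show "delta p (2*u) * delta q (2*u+1) + delta p (2*u+1) * delta q (2*u+1+1) =
      (delta p u * delta (q-1) u + delta p u * delta (q+1) (u+1) + delta (p-1) u * delta q (u+1)
       + delta (p+1) (u+1) * delta q (u+1)) / 2"
      unfolding delta_even delta_odd by (simp add: field_simps)
  qed simp
  also have "\<dots> = (DA lam p (q-1) + DC lam p (q+1) + DC lam (p-1) q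
      + (\<Sum>u\<in>{2^lam..<2^(lam+1)}. delta (p+1) (u+1) * delta q (u+1))) / 2"
    unfolding DA_def DC_def by (simp only: sum.distrib sum_divide_distrib[symmetric])
  also have "\<dots> = (DA lam p (q-1) + DC lam p (q+1) + DC lam (p-1) q + DA lam (p+1) q) / 2"
    unfolding shift_pow DA_def ..
  finally show ?thesis .
qed

lemma bsum_range: "t \<in> {2^lam..<2^(lam+1)} \<Longrightarrow> bsum t \<le> lam + 1 \<and> bsum (t+1) \<le> lam + 1"
proof -
  assume t: "t \<in> {2^lam..<2^(lam+1)}"
  then have "bsum t \<le> lam + 1" using bsum_lt_pow by auto
  moreover have "bsum (t+1) \<le> lam + 1"
  proof (cases "t + 1 = 2^(lam+1)")
    case True then show ?thesis by (simp only: True bsum_pow)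
  next
    case False then show ?thesis using t bsum_lt_pow by auto
  qed
  ultimately show ?thesis by simp
qed

lemma DA_zero: "p > int lam + 1 \<or> q > int lam + 1 \<Longrightarrow> DA lam p q = 0"
  unfolding DA_def
proof (rule sum.neutral, rule ballI)
  fix t :: nat assume "p > int lam + 1 \<or> q > int lam + 1" "t \<in> {2^lam..<2^(lam+1)}"
  then show "delta p t * delta q t = 0" using bsum_range[of t lam] delta_big[of t p] delta_big[of t q]
    by force
qed

lemma DC_zero: "p > int lam + 1 \<or> q > int lam + 1 \<Longrightarrow> DC lam p q = 0"
  unfolding DC_def
proof (rule sum.neutral, rule ballI)
  fix t :: nat assume "p > int lam + 1 \<or> q > int lam + 1" "t \<in> {2^lam..<2^(lam+1)}"
  then show "delta p t * delta q (t+1) = 0" using bsum_range[of t lam] delta_big[of t p] delta_big[of "t+1" q]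
    by force
qed

lemma DA_0: "DA 0 p q = d1 p * d1 q"
proof -
  have "{2^0..<2^(0+1)} = {1::nat}" by auto
  then show ?thesis unfolding DA_def by (simp add: delta_1[unfolded One_nat_def])
qed

lemma DC_0: "DC 0 p q = d1 p * d1 q"
proof -
  have "{2^0..<2^(0+1)} = {1::nat}" by auto
  moreover have "delta q (1+1) = delta q 1" using delta_pow[of q 1] by (simp add: numeral_2_eq_2)
  ultimately show ?thesis unfolding DC_def by (simp add: delta_1[unfolded One_nat_def])
qed


definition ccoef :: "nat \<Rightarrow> nat \<Rightarrow> nat \<Rightarrow> real" where
  "ccoef lam k l = 4 ^ lam * DC lam (int lam + 1 - int k) (int lam + 1 - int l)"

lemma acoef_DA: "acoef lam k l = 4 ^ lam * DA lam (int lam + 1 - int k) (int lam + 1 - int l)"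
  unfolding acoef_def DA_def ..

lemma acoef_sym: "acoef lam k l = acoef lam l k"
  unfolding acoef_def by (simp add: mult.commute)

lemma DAk: "4^lam * DA lam (int lam + 1 - int k + int s) (int lam + 1 - int l + int r)
   = (if s \<le> k \<and> r \<le> l then acoef lam (k-s) (l-r) else 0)"
proof (cases "s \<le> k \<and> r \<le> l")
  case True
  then have "int lam + 1 - int k + int s = int lam + 1 - int (k - s)"
    "int lam + 1 - int l + int r = int lam + 1 - int (l - r)" by (simp_all)
  then show ?thesis unfolding if_P[OF True] acoef_DA by (simp only:)
next
  case False
  then show ?thesis by (auto intro!: DA_zero)
qed

lemma DCk: "4^lam * DC lam (int lam + 1 - int k + int s) (int lam + 1 - int l + int r)
   = (if s \<le> k \<and> r \<le> l then ccoef lam (k-s) (l-r) else 0)"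
proof (cases "s \<le> k \<and> r \<le> l")
  case True
  then have "int lam + 1 - int k + int s = int lam + 1 - int (k - s)"
    "int lam + 1 - int l + int r = int lam + 1 - int (l - r)" by (simp_all)
  then show ?thesis unfolding if_P[OF True] ccoef_def by (simp only:)
next
  case False
  then show ?thesis by (auto intro!: DC_zero)
qed

lemma acoef_Suc: "acoef (Suc lam) k l =
   4 * (if 1 \<le> k \<and> 1 \<le> l then acoef lam (k-1) (l-1) else 0) + acoef lam k l
   + (if 2 \<le> k \<and> 2 \<le> l then acoef lam (k-2) (l-2) else 0)
   + (if 0 \<le> k \<and> 2 \<le> l then ccoef lam (k-0) (l-2) else 0)
   + (if 0 \<le> l \<and> 2 \<le> k then ccoef lam (l-0) (k-2) else 0)"
proof -
  have "acoef (Suc lam) k l =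
    4 * (4^lam * DA lam (int lam + 1 - int k + int 1) (int lam + 1 - int l + int 1))
    + 4^lam * DA lam (int lam + 1 - int k + int 0) (int lam + 1 - int l + int 0)
    + 4^lam * DA lam (int lam + 1 - int k + int 2) (int lam + 1 - int l + int 2)
    + 4^lam * DC lam (int lam + 1 - int k + int 0) (int lam + 1 - int l + int 2)
    + 4^lam * DC lam (int lam + 1 - int l + int 0) (int lam + 1 - int k + int 2)"
    by (simp add: acoef_DA DA_rec algebra_simps)
  also have "\<dots> = 4 * (if 1 \<le> k \<and> 1 \<le> l then acoef lam (k-1) (l-1) else 0) + acoef lam k l
   + (if 2 \<le> k \<and> 2 \<le> l then acoef lam (k-2) (l-2) else 0)
   + (if 0 \<le> k \<and> 2 \<le> l then ccoef lam (k-0) (l-2) else 0)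
   + (if 0 \<le> l \<and> 2 \<le> k then ccoef lam (l-0) (k-2) else 0)"
    unfolding DAk DCk by simp
  finally show ?thesis .
qed

lemma ccoef_Suc: "ccoef (Suc lam) k l =
   2 * ((if 1 \<le> k \<and> 0 \<le> l then acoef lam (k-1) (l-0) else 0)
   + (if 1 \<le> k \<and> 2 \<le> l then ccoef lam (k-1) (l-2) else 0)
   + (if 0 \<le> k \<and> 1 \<le> l then ccoef lam (k-0) (l-1) else 0)
   + (if 2 \<le> k \<and> 1 \<le> l then acoef lam (k-2) (l-1) else 0))"
proof -
  have "ccoef (Suc lam) k l =
    2 * (4^lam * DA lam (int lam + 1 - int k + int 1) (int lam + 1 - int l + int 0)
    + 4^lam * DC lam (int lam + 1 - int k + int 1) (int lam + 1 - int l + int 2)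
    + 4^lam * DC lam (int lam + 1 - int k + int 0) (int lam + 1 - int l + int 1)
    + 4^lam * DA lam (int lam + 1 - int k + int 2) (int lam + 1 - int l + int 1))"
    by (simp add: ccoef_def DC_rec algebra_simps)
  also have "\<dots> = 2 * ((if 1 \<le> k \<and> 0 \<le> l then acoef lam (k-1) (l-0) else 0)
   + (if 1 \<le> k \<and> 2 \<le> l then ccoef lam (k-1) (l-2) else 0)
   + (if 0 \<le> k \<and> 1 \<le> l then ccoef lam (k-0) (l-1) else 0)
   + (if 2 \<le> k \<and> 1 \<le> l then acoef lam (k-2) (l-1) else 0))"
    unfolding DAk DCk by simp
  finally show ?thesis .
qed

lemma d1_base: "d1 (1 - int k) = 1 / 2^(k+1)"
proof -
  have "nat (2 - (1 - int k)) = k + 1" by simp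
  then show ?thesis by (simp add: d1_def)
qed

lemma acoef_0: "acoef 0 k l = 1 / 2^(k+1) * (1 / 2^(l+1))"
  using acoef_DA[of 0 k l] DA_0 d1_base by simp

lemma ccoef_0: "ccoef 0 k l = 1 / 2^(k+1) * (1 / 2^(l+1))"
  using ccoef_def[of 0 k l] DC_0 d1_base by simp


definition gC :: fps3 where "gC = mk ccoef"
definition gCT :: fps3 where "gCT = mk (\<lambda>a b c. ccoef a c b)"
definition B0 :: fps3 where "B0 = mk (\<lambda>a b c. if a = 0 then 1 / 2^(b+1) * (1 / 2^(c+1)) else 0)"

lemma E1: "gfA = B0 + Xv * (4 * (Yv * (Zv * gfA)) + gfA + Yv * (Yv * (Zv * (Zv * gfA)))
   + Zv * (Zv * gC) + Yv * (Yv * gCT))"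
  unfolding gfA_mk gC_def gCT_def B0_def
  unfolding mk_X mk_Y mk_Z mk_num mk_add mk_eq_iff
proof (intro ext)
  fix a b c
  show "acoef a b c = (if a = 0 then 1 / 2 ^ (b + 1) * (1 / 2 ^ (c + 1)) else 0) + 
      (if a = 0 then 0 else
       4 * (if b = 0 then 0 else if c = 0 then 0 else acoef (a - 1) (b - 1) (c - 1)) + acoef (a - 1) b c +
         (if b = 0 then 0 else if b - 1 = 0 then 0 else if c = 0 then 0 else if c - 1 = 0 then 0 else acoef (a - 1) (b - 1 - 1) (c - 1 - 1)) +
         (if c = 0 then 0 else if c - 1 = 0 then 0 else ccoef (a - 1) b (c - 1 - 1)) +
         (if b = 0 then 0 else if b - 1 = 0 then 0 else ccoef (a - 1) c (b - 1 - 1)))"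
  proof (cases a)
    case 0 then show ?thesis by (simp add: acoef_0)
  next
    case (Suc lam)
    show ?thesis unfolding Suc acoef_Suc
      by (simp add: numeral_2_eq_2 diff_Suc split: nat.split)
  qed
qed

lemma E2: "gC = B0 + Xv * (2 * (Yv * gfA) + 2 * (Yv * (Zv * (Zv * gC))) + 2 * (Zv * gC)
   + 2 * (Yv * (Yv * (Zv * gfA))))"
  unfolding gfA_mk gC_def gCT_def B0_def
  unfolding mk_X mk_Y mk_Z mk_num mk_add mk_eq_iff
  apply (intro ext)
  subgoal for a b c
    apply (cases a)
     apply (simp add: ccoef_0)
    apply (simp only: ccoef_Suc)
    apply (simp add: numeral_2_eq_2 diff_Suc split: nat.split)
    done
  done

lemma E3: "gCT = B0 + Xv * (2 * (Zv * gfA) + 2 * (Zv * (Yv * (Yv * gCT))) + 2 * (Yv * gCT)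
   + 2 * (Zv * (Zv * (Yv * gfA))))"
  unfolding gfA_mk gC_def gCT_def B0_def
  unfolding mk_X mk_Y mk_Z mk_num mk_add mk_eq_iff
  apply (intro ext)
  subgoal for a b c
    apply (cases a)
     apply (simp add: ccoef_0)
    apply (simp only: ccoef_Suc)
    apply (simp add: numeral_2_eq_2 diff_Suc split: nat.split)
    apply (simp add: acoef_sym)
    done
  done


lemma coeff3_X0: "coeff3 (Xv * F) 0 b c = 0"
  by (subst mk_coeff3[symmetric]) (simp only: mk_X coeff3_mk, simp)

lemma coeff3_diff: "coeff3 (F - G) a b c = coeff3 F a b c - coeff3 G a b c"
  unfolding coeff3_def by simp

lemma coeff3_one: "coeff3 1 a b c = (if a = 0 \<and> b = 0 \<and> c = 0 then 1 else 0)"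
  by (simp add: mk_one)

lemma coeff3_1X: "coeff3 (1 - Xv * F) 0 0 0 = 1"
  by (simp add: coeff3_diff coeff3_one coeff3_X0)

lemma P_inv: "inverse ((2 - Yv) * (2 - Zv)) = B0"
proof (rule inv_unique)
  have e: "(2 - Yv) * (2 - Zv) * B0 = 4 * B0 - 2 * (Yv * B0) - 2 * (Zv * B0) + Yv * (Zv * B0)"
    by (simp add: algebra_simps)
  show "(2 - Yv) * (2 - Zv) * B0 = 1"
    unfolding e
    unfolding B0_def mk_X mk_Y mk_Z mk_num mk_add mk_diff mk_one mk_eq_iff
    apply (intro ext)
    subgoal for a b c
      by (cases a; cases b; cases c) (simp_all add: field_simps)
    done
  have e2: "(2 - Yv) * (2 - Zv) = 4 * 1 - 2 * (Yv * 1) - 2 * (Zv * 1) + Yv * (Zv * (1::fps3))"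
    by (simp add: algebra_simps)
  show "coeff3 ((2 - Yv) * (2 - Zv)) 0 0 0 \<noteq> 0"
    unfolding e2 mk_one mk_X mk_Y mk_Z mk_num mk_add mk_diff coeff3_mk by simp
qed

lemma part1: "gfA = inverse ((2 - Yv) * (2 - Zv)) *
           ((1 + Xv * Zv^2 * inverse (1 - 2 * Xv * Zv * (1 + Yv * Zv))
               + Xv * Yv^2 * inverse (1 - 2 * Xv * Yv * (1 + Yv * Zv)))
            * inverse (1 - Xv * (1 + Yv * Zv)^2
               - Xv * Yv * Zv * inverse (1 - 2 * Xv * Zv * (1 + Yv * Zv))
               - Xv * Yv * Zv * inverse (1 - 2 * Xv * Yv * (1 + Yv * Zv))))"
proof -
  define u where "u = 1 - 2 * Xv * Zv * (1 + Yv * Zv)"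
  define v where "v = 1 - 2 * Xv * Yv * (1 + Yv * Zv)"
  define iu where "iu = inverse u"
  define iv where "iv = inverse v"
  define D where "D = 1 - Xv * (1 + Yv * Zv)^2 - Xv * Yv * Zv * iu - Xv * Yv * Zv * iv"
  define N where "N = 1 + Xv * Zv^2 * iu + Xv * Yv^2 * iv"
  have hu: "u * iu = 1" unfolding iu_def
  proof (rule inv3)
    have "u = 1 - Xv * (2 * Zv * (1 + Yv * Zv))" unfolding u_def by (simp add: algebra_simps)
    then show "coeff3 u 0 0 0 \<noteq> 0" using coeff3_1X by simp
  qed
  have hv: "v * iv = 1" unfolding iv_def
  proof (rule inv3)
    have "v = 1 - Xv * (2 * Yv * (1 + Yv * Zv))" unfolding v_def by (simp add: algebra_simps)
    then show "coeff3 v 0 0 0 \<noteq> 0" using coeff3_1X by simp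
  qed
  have hD: "D * inverse D = 1"
    by (rule inv3) (simp add: D_def mult.assoc coeff3_diff coeff3_1X coeff3_X0 coeff3_one)
  have e1: "gfA = B0 + Xv * (4 * (Yv * (Zv * gfA)) + gfA + Yv * (Yv * (Zv * (Zv * gfA)))
   + Zv * (Zv * gC) + Yv * (Yv * gCT))" by (rule E1)
  have e2: "gC = B0 + Xv * (2 * (Yv * gfA) + 2 * (Yv * (Zv * (Zv * gC))) + 2 * (Zv * gC)
   + 2 * (Yv * (Yv * (Zv * gfA))))" by (rule E2)
  have e3: "gCT = B0 + Xv * (2 * (Zv * gfA) + 2 * (Zv * (Yv * (Yv * gCT))) + 2 * (Yv * gCT)
   + 2 * (Zv * (Zv * (Yv * gfA))))" by (rule E3)
  define w where "w = 1 + Yv * Zv"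
  have h2: "gC = (B0 + 2 * Xv * Yv * w * gfA) * iu"
  proof -
    have "gC * u - (B0 + 2 * Xv * Yv * w * gfA) = gC - (B0 + Xv * (2 * (Yv * gfA) + 2 * (Yv * (Zv * (Zv * gC))) + 2 * (Zv * gC)
   + 2 * (Yv * (Yv * (Zv * gfA)))))"
      unfolding u_def w_def by (simp add: algebra_simps)
    then have "gC * u = B0 + 2 * Xv * Yv * w * gfA" using e2 by simp
    then have "gC * (u * iu) = (B0 + 2 * Xv * Yv * w * gfA) * iu" by (simp add: mult.assoc[symmetric])
    then show ?thesis using hu by simp
  qed
  have h3: "gCT = (B0 + 2 * Xv * Zv * w * gfA) * iv"
  proof -
    have "gCT * v - (B0 + 2 * Xv * Zv * w * gfA) = gCT - (B0 + Xv * (2 * (Zv * gfA) + 2 * (Zv * (Yv * (Yv * gCT))) + 2 * (Yv * gCT)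
   + 2 * (Zv * (Zv * (Yv * gfA)))))"
      unfolding v_def w_def by (simp add: algebra_simps)
    then have "gCT * v = B0 + 2 * Xv * Zv * w * gfA" using e3 by simp
    then have "gCT * (v * iv) = (B0 + 2 * Xv * Zv * w * gfA) * iv" by (simp add: mult.assoc[symmetric])
    then show ?thesis using hv by simp
  qed
  have h1: "gfA * (1 - Xv * w^2 - 2 * Xv * Yv * Zv) = B0 + Xv * Zv^2 * gC + Xv * Yv^2 * gCT"
  proof -
    have "gfA * (1 - Xv * w^2 - 2 * Xv * Yv * Zv) - (B0 + Xv * Zv^2 * gC + Xv * Yv^2 * gCT)
      = gfA - (B0 + Xv * (4 * (Yv * (Zv * gfA)) + gfA + Yv * (Yv * (Zv * (Zv * gfA)))
   + Zv * (Zv * gC) + Yv * (Yv * gCT)))"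
      unfolding w_def by (simp add: algebra_simps power2_eq_square)
    then show ?thesis using e1 by simp
  qed
  have s1: "2 * Xv * Zv * w * iu = iu - 1"
  proof -
    have "2 * Xv * Zv * w * iu = iu - u * iu" unfolding u_def w_def by (simp add: algebra_simps)
    then show ?thesis using hu by simp
  qed
  have s2: "2 * Xv * Yv * w * iv = iv - 1"
  proof -
    have "2 * Xv * Yv * w * iv = iv - v * iv" unfolding v_def w_def by (simp add: algebra_simps)
    then show ?thesis using hv by simp
  qed
  have key: "gfA * D = B0 * N"
  proof -
    have "gfA * D = gfA * (1 - Xv * w^2 - 2 * Xv * Yv * Zv) + Xv * Yv * Zv * gfA * (2 - iu - iv)"
      unfolding D_def w_def by (simp add: algebra_simps)
    also have "\<dots> = B0 + Xv * Zv^2 * ((B0 + 2 * Xv * Yv * w * gfA) * iu) + Xv * Yv^2 * ((B0 + 2 * Xv * Zv * w * gfA) * iv)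
        + Xv * Yv * Zv * gfA * (2 - iu - iv)"
      unfolding h1 h2[symmetric] h3[symmetric] ..
    also have "\<dots> = B0 * N + Xv * Yv * Zv * gfA * ((2 * Xv * Zv * w * iu) + (2 * Xv * Yv * w * iv) + 2 - iu - iv)"
      unfolding N_def by (simp add: algebra_simps power2_eq_square)
    also have "\<dots> = B0 * N" unfolding s1 s2 by simp
    finally show ?thesis .
  qed
  have "gfA = gfA * D * inverse D" using hD by (simp add: mult.assoc)
  also have "\<dots> = B0 * (N * inverse D)" using key by (simp add: mult.assoc)
  finally show ?thesis unfolding P_inv N_def D_def iu_def iv_def u_def v_def .
qed


lemma Sset_disj: "i \<noteq> j \<Longrightarrow> Sset i t \<inter> Sset j t = {}"
  unfolding Sset_def by auto

lemma cdens_sum: assumes t: "t \<in> {2^lam..<2^(lam+1)}"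
  shows "cdens t = (\<Sum>k\<in>{0..lam+1}. delta (int lam + 1 - int k) t)"
proof -
  have bt: "bsum t \<le> lam + 1" using bsum_range[OF t] by simp
  have "{n. bsum (n + t) \<ge> bsum n} = (\<Union>i\<in>{0..lam+1}. Sset (int i) t)"
  proof (intro set_eqI iffI)
    fix n assume "n \<in> {n. bsum (n + t) \<ge> bsum n}"
    then have "bsum (n+t) \<ge> bsum n" by simp
    moreover have "bsum (n+t) \<le> bsum n + bsum t" by (rule bsum_add_le)
    ultimately have "n \<in> Sset (int (bsum (n+t) - bsum n)) t" "bsum (n+t) - bsum n \<in> {0..lam+1}"
      unfolding Sset_def using bt by auto
    then show "n \<in> (\<Union>i\<in>{0..lam+1}. Sset (int i) t)" by blast
  next
    fix n assume "n \<in> (\<Union>i\<in>{0..lam+1}. Sset (int i) t)"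
    then show "n \<in> {n. bsum (n + t) \<ge> bsum n}" unfolding Sset_def by auto
  qed
  moreover have "has_dens (\<Union>i\<in>{0..lam+1}. Sset (int i) t) (\<Sum>i\<in>{0..lam+1}. delta (int i) t)"
    apply (rule has_dens_UN)
      apply simp
     apply (rule delta_dens)
    apply (rule Sset_disj)
    apply simp
    done
  ultimately have "cdens t = (\<Sum>i\<in>{0..lam+1}. delta (int i) t)"
    unfolding cdens_def by (simp add: adensity_eq)
  also have "\<dots> = (\<Sum>k\<in>{0..lam+1}. delta (int (lam + 1 + 0 - k)) t)"
    by (rule sum.atLeastAtMost_rev)
  also have "\<dots> = (\<Sum>k\<in>{0..lam+1}. delta (int lam + 1 - int k) t)"
    by (rule sum.cong) (auto simp: algebra_simps)
  finally show ?thesis .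
qed

lemma ctdens_sum: assumes t: "t \<in> {2^lam..<2^(lam+1)}"
  shows "ctdens t = (\<Sum>k\<in>{0..lam}. delta (int lam + 1 - int k) t)"
proof -
  have bt: "bsum t \<le> lam + 1" using bsum_range[OF t] by simp
  have "{n. bsum (n + t) > bsum n} = (\<Union>i\<in>{0..lam}. Sset (int i + 1) t)"
  proof (intro set_eqI iffI)
    fix n assume "n \<in> {n. bsum (n + t) > bsum n}"
    then have "bsum (n+t) > bsum n" by simp
    moreover have "bsum (n+t) \<le> bsum n + bsum t" by (rule bsum_add_le)
    ultimately have "n \<in> Sset (int (bsum (n+t) - bsum n - 1) + 1) t" "bsum (n+t) - bsum n - 1 \<in> {0..lam}"
      unfolding Sset_def using bt by auto
    then show "n \<in> (\<Union>i\<in>{0..lam}. Sset (int i + 1) t)" by blast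
  next
    fix n assume "n \<in> (\<Union>i\<in>{0..lam}. Sset (int i + 1) t)"
    then show "n \<in> {n. bsum (n + t) > bsum n}" unfolding Sset_def by auto
  qed
  moreover have "has_dens (\<Union>i\<in>{0..lam}. Sset (int i + 1) t) (\<Sum>i\<in>{0..lam}. delta (int i + 1) t)"
    apply (rule has_dens_UN)
      apply simp
     apply (rule delta_dens)
    apply (rule Sset_disj)
    apply simp
    done
  ultimately have "ctdens t = (\<Sum>i\<in>{0..lam}. delta (int i + 1) t)"
    unfolding ctdens_def by (simp add: adensity_eq)
  also have "\<dots> = (\<Sum>k\<in>{0..lam}. delta (int (lam + 0 - k) + 1) t)"
    by (rule sum.atLeastAtMost_rev)
  also have "\<dots> = (\<Sum>k\<in>{0..lam}. delta (int lam + 1 - int k) t)"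
    by (rule sum.cong) (auto simp: algebra_simps)
  finally show ?thesis .
qed

lemma sq_sum: "(\<Sum>t\<in>T. (\<Sum>k\<in>K. h k t)^2) = (\<Sum>k\<in>K. \<Sum>l\<in>K. \<Sum>t\<in>T. h k t * h l t :: real)"
proof -
  have "(\<Sum>t\<in>T. (\<Sum>k\<in>K. h k t)^2) = (\<Sum>t\<in>T. \<Sum>k\<in>K. \<Sum>l\<in>K. h k t * h l t)"
    by (simp add: power2_eq_square sum_product)
  also have "\<dots> = (\<Sum>k\<in>K. \<Sum>t\<in>T. \<Sum>l\<in>K. h k t * h l t)" by (rule sum.swap)
  also have "\<dots> = (\<Sum>k\<in>K. \<Sum>l\<in>K. \<Sum>t\<in>T. h k t * h l t)" by (rule sum.cong[OF refl], rule sum.swap)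
  finally show ?thesis .
qed

lemma acoef_div: "acoef lam k l / 4^lam = (\<Sum>t\<in>{2^lam..<2^(lam+1)}.
      delta (int lam + 1 - int k) t * delta (int lam + 1 - int l) t)"
  unfolding acoef_def by simp

lemma part2: "(\<Sum>t\<in>{2^lam..<2^(lam+1)}. (cdens t)^2)
           = 1 / 4^lam * (\<Sum>k\<in>{0..lam+1}. \<Sum>l\<in>{0..lam+1}. acoef lam k l)"
proof -
  have "(\<Sum>t\<in>{2^lam..<2^(lam+1)}. (cdens t)^2) =
     (\<Sum>t\<in>{2^lam..<2^(lam+1)}. (\<Sum>k\<in>{0..lam+1}. delta (int lam + 1 - int k) t)^2)"
    by (rule sum.cong) (simp_all add: cdens_sum)
  also have "\<dots> = (\<Sum>k\<in>{0..lam+1}. \<Sum>l\<in>{0..lam+1}. acoef lam k l / 4^lam)"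
    unfolding sq_sum acoef_div ..
  also have "\<dots> = 1 / 4^lam * (\<Sum>k\<in>{0..lam+1}. \<Sum>l\<in>{0..lam+1}. acoef lam k l)"
    unfolding sum_divide_distrib[symmetric] by simp
  finally show ?thesis .
qed

lemma part3: "(\<Sum>t\<in>{2^lam..<2^(lam+1)}. (ctdens t)^2)
           = 1 / 4^lam * (\<Sum>k\<in>{0..lam}. \<Sum>l\<in>{0..lam}. acoef lam k l)"
proof -
  have "(\<Sum>t\<in>{2^lam..<2^(lam+1)}. (ctdens t)^2) =
     (\<Sum>t\<in>{2^lam..<2^(lam+1)}. (\<Sum>k\<in>{0..lam}. delta (int lam + 1 - int k) t)^2)"
    by (rule sum.cong) (simp_all add: ctdens_sum)
  also have "\<dots> = (\<Sum>k\<in>{0..lam}. \<Sum>l\<in>{0..lam}. acoef lam k l / 4^lam)"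
    unfolding sq_sum acoef_div ..
  also have "\<dots> = 1 / 4^lam * (\<Sum>k\<in>{0..lam}. \<Sum>l\<in>{0..lam}. acoef lam k l)"
    unfolding sum_divide_distrib[symmetric] by simp
  finally show ?thesis .
qed

definition G1 :: fps3 where "G1 = mk (\<lambda>a b c. if a = 0 then 1 else 0)"

lemma G1_inv: "inverse ((1 - Yv) * (1 - Zv)) = G1"
proof (rule inv_unique)
  have e: "(1 - Yv) * (1 - Zv) * G1 = G1 - Yv * G1 - Zv * G1 + Yv * (Zv * G1)"
    by (simp add: algebra_simps)
  show "(1 - Yv) * (1 - Zv) * G1 = 1"
    unfolding e
    unfolding G1_def mk_X mk_Y mk_Z mk_add mk_diff mk_one mk_eq_iff
    apply (intro ext)
    subgoal for a b c
      by (cases a; cases b; cases c) simp_all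
    done
  have e2: "(1 - Yv) * (1 - Zv) = 1 - Yv * 1 - Zv * 1 + Yv * (Zv * (1::fps3))"
    by (simp add: algebra_simps)
  show "coeff3 ((1 - Yv) * (1 - Zv)) 0 0 0 \<noteq> 0"
    unfolding e2
    unfolding mk_one mk_X mk_Y mk_Z mk_add mk_diff coeff3_mk by simp
qed

lemma G1_const: "G1 = fps_const (Abs_fps (\<lambda>b. Abs_fps (\<lambda>c. 1)))"
  unfolding G1_def mk_def by (intro fps_ext) (simp add: fps_ext)

lemma coeff_prod: "coeff3 (gfA * inverse ((1 - Yv) * (1 - Zv))) a b c
   = (\<Sum>k\<in>{0..b}. \<Sum>l\<in>{0..c}. acoef a k l)"
  unfolding G1_inv G1_const coeff3_def gfA_def
  apply (simp only: fps_mult_right_const_nth)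
  apply (simp add: fps_mult_nth fps_sum_nth)
  done

lemma part4: "1 / 2^lam * (\<Sum>t\<in>{2^lam..<2^(lam+1)}. (cdens t)^2)
           = 1 / 8^lam * coeff3 (gfA * inverse ((1 - Yv) * (1 - Zv))) lam (lam+1) (lam+1)"
proof -
  have "(8::real)^lam = 2^lam * 4^lam" by (simp add: power_mult_distrib[symmetric])
  then show ?thesis unfolding part2 coeff_prod by simp
qed

lemma part5: "1 / 2^lam * (\<Sum>t\<in>{2^lam..<2^(lam+1)}. (ctdens t)^2)
           = 1 / 8^lam * coeff3 (gfA * inverse ((1 - Yv) * (1 - Zv))) lam lam lam"
proof -
  have "(8::real)^lam = 2^lam * 4^lam" by (simp add: power_mult_distrib[symmetric])
  then show ?thesis unfolding part3 coeff_prod by simp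
qed


theorem lemma4p2:
  shows "(gfA = inverse ((2 - Yv) * (2 - Zv)) *
           ((1 + Xv * Zv^2 * inverse (1 - 2 * Xv * Zv * (1 + Yv * Zv))
               + Xv * Yv^2 * inverse (1 - 2 * Xv * Yv * (1 + Yv * Zv)))
            * inverse (1 - Xv * (1 + Yv * Zv)^2
               - Xv * Yv * Zv * inverse (1 - 2 * Xv * Zv * (1 + Yv * Zv))
               - Xv * Yv * Zv * inverse (1 - 2 * Xv * Yv * (1 + Yv * Zv))))) \<and>
    (\<forall>lam::nat. (\<Sum>t\<in>{2^lam..<2^(lam+1)}. (cdens t)^2)
           = 1 / 4^lam * (\<Sum>k\<in>{0..lam+1}. \<Sum>l\<in>{0..lam+1}. acoef lam k l)) \<and>
    (\<forall>lam::nat. (\<Sum>t\<in>{2^lam..<2^(lam+1)}. (ctdens t)^2)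
           = 1 / 4^lam * (\<Sum>k\<in>{0..lam}. \<Sum>l\<in>{0..lam}. acoef lam k l)) \<and>
    (\<forall>lam::nat. 1 / 2^lam * (\<Sum>t\<in>{2^lam..<2^(lam+1)}. (cdens t)^2)
           = 1 / 8^lam * coeff3 (gfA * inverse ((1 - Yv) * (1 - Zv))) lam (lam+1) (lam+1)) \<and>
    (\<forall>lam::nat. 1 / 2^lam * (\<Sum>t\<in>{2^lam..<2^(lam+1)}. (ctdens t)^2)
           = 1 / 8^lam * coeff3 (gfA * inverse ((1 - Yv) * (1 - Zv))) lam lam lam)"
  using part1 part2 part3 part4 part5 by blast

end
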